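(* Let $\tilde R<0$ and suppose the intervention set $\mathcal I$ of $\mathcal G$ is partial. Then every optimal policy $\tilde\pi^*$ of the absorbing MDP $\tilde{\mathcal M}$ (i.e. $\tilde V^{\tilde\pi^*}(d_0)=\sup_\pi\tilde V^\pi(d_0)$) satisfies $P_{\mathcal G}(\tilde\pi^* )=0$.
   Context: $\mathcal M=(\mathcal S,\mathcal A,P,r,\gamma)$ is a discounted MDP with discrete state and action spaces, reward $r(s,a)\in[0,1]$, discount $\gamma\in[0,1)$, initial distribution $d_0$. $\mathcal S$ contains two distinguished states $s_\triangleright,s_\circ$ forming $\mathcal S_{\mathrm{unsafe}}$; $\mathcal S_{\mathrm{safe}}=\mathcal S\setminus\mathcal S_{\mathrm{unsafe}}$; from $s_\triangleright$ every action leads to $s_\circ$, $s_\circ$ is absorbing, and $r=0$ on $\mathcal S_{\mathrm{unsafe}}$. Policies are stationary. Intervention rule: $\mathcal G=(\bar Q,\mu,\eta)$ with backup policy $\mu$, $\eta\in[0,1]$, $\bar Q:\mathcal S_{\mathrm{safe}}\times\mathcal A\to[0,1]$; intervention set $\mathcal I=\{(s,a)\in\mathcal S_{\mathrm{safe}}\times\mathcal A:\bar Q(s,a)-\mathbb E_{a'\sim\mu(\cdot|s)}\bar Q(s,a')>\eta\}$. A set $\mathcal X\subseteq\mathcal S_{\mathrm{safe}}\times\mathcal A$ is partial if for every $(s,a)\in\mathcal X$ there is $a'$ with $(s,a')\notin\mathcal X$. Absorbing MDP: $\tilde{\mathcal M}=(\mathcal S\cup\{s_\dagger\},\mathcal A,\tilde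 P,\tilde r,\gamma)$: $\tilde r(s,a)=\tilde R$ if $(s,a)\in\mathcal I$, $\tilde r(s_\dagger,a)=0$, $\tilde r=r$ otherwise; $\tilde P(\cdot|s,a)$ is the point mass at $s_\dagger$ if $(s,a)\in\mathcal I$ or $s=s_\dagger$, and $P(\cdot|s,a)$ otherwise; $\tilde V^\pi(d_0)$ is the value of $\pi$ in $\tilde{\mathcal M}$ from $d_0$. $P_{\mathcal G}(\pi)=(1-\gamma)\sum_{h\ge0}\gamma^h\Pr(\exists t\le h:(s_t,a_t)\in\mathcal I)$, for trajectories of $\pi$ in $\mathcal M$ from $s_0\sim d_0$. *)

theory Defs
  imports "HOL-Probability.Probability"
begin

primrec state_dist :: "'s pmf \<Rightarrow> ('s \<Rightarrow> 'a \<Rightarrow> 's pmf) \<Rightarrow> ('s \<Rightarrow> 'a pmf) \<Rightarrow> nat \<Rightarrow> 's pmf" where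
  "state_dist d0 P pol 0 = d0"
| "state_dist d0 P pol (Suc t) =
     bind_pmf (state_dist d0 P pol t) (\<lambda>s. bind_pmf (pol s) (\<lambda>a. P s a))"

definition sa_dist :: "'s pmf \<Rightarrow> ('s \<Rightarrow> 'a \<Rightarrow> 's pmf) \<Rightarrow> ('s \<Rightarrow> 'a pmf) \<Rightarrow> nat \<Rightarrow> ('s \<times> 'a) pmf" where
  "sa_dist d0 P pol t = bind_pmf (state_dist d0 P pol t) (\<lambda>s. map_pmf (\<lambda>a. (s, a)) (pol s))"

definition mdp_value :: "real \<Rightarrow> ('s \<Rightarrow> 'a \<Rightarrow> real) \<Rightarrow> 's pmf \<Rightarrow> ('s \<Rightarrow> 'a \<Rightarrow> 's pmf) \<Rightarrow> ('s \<Rightarrow> 'a pmf) \<Rightarrow> real" where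
  "mdp_value \<gamma> r d0 P pol =
     (\<Sum>t. \<gamma> ^ t * measure_pmf.expectation (sa_dist d0 P pol t) (\<lambda>(s, a). r s a))"

primrec traj :: "'s pmf \<Rightarrow> ('s \<Rightarrow> 'a \<Rightarrow> 's pmf) \<Rightarrow> ('s \<Rightarrow> 'a pmf) \<Rightarrow> nat \<Rightarrow> ('s \<times> 'a) list pmf" where
  "traj d0 P pol 0 = bind_pmf d0 (\<lambda>s. map_pmf (\<lambda>a. [(s, a)]) (pol s))"
| "traj d0 P pol (Suc h) =
     bind_pmf (traj d0 P pol h) (\<lambda>xs. bind_pmf (P (fst (last xs)) (snd (last xs)))
        (\<lambda>s'. map_pmf (\<lambda>a'. xs @ [(s', a')]) (pol s')))"

definition interv_set :: "'s set \<Rightarrow> ('s \<Rightarrow> 'a \<Rightarrow> real) \<Rightarrow> ('s \<Rightarrow> 'a pmf) \<Rightarrow> real \<Rightarrow> ('s \<times> 'a) set" where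
  "interv_set S_safe Qbar mu \<eta> =
     {(s, a). s \<in> S_safe \<and> Qbar s a - measure_pmf.expectation (mu s) (Qbar s) > \<eta>}"

definition partial_set :: "('s \<times> 'a) set \<Rightarrow> bool" where
  "partial_set X \<longleftrightarrow> (\<forall>(s, a) \<in> X. \<exists>a'. (s, a') \<notin> X)"

definition interv_prob :: "real \<Rightarrow> ('s \<times> 'a) set \<Rightarrow> 's pmf \<Rightarrow> ('s \<Rightarrow> 'a \<Rightarrow> 's pmf) \<Rightarrow> ('s \<Rightarrow> 'a pmf) \<Rightarrow> real" where
  "interv_prob \<gamma> I d0 P pol =
     (1 - \<gamma>) * (\<Sum>h. \<gamma> ^ h * measure_pmf.prob (traj d0 P pol h) {xs. \<exists>p \<in> set xs. p \<in> I})"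

text \<open>Absorbing MDP: state space 's option, with None playing the role of s_dagger.\<close>
fun abs_P :: "('s \<Rightarrow> 'a \<Rightarrow> 's pmf) \<Rightarrow> ('s \<times> 'a) set \<Rightarrow> 's option \<Rightarrow> 'a \<Rightarrow> 's option pmf" where
  "abs_P P I None a = return_pmf None"
| "abs_P P I (Some s) a = (if (s, a) \<in> I then return_pmf None else map_pmf Some (P s a))"

fun abs_r :: "('s \<Rightarrow> 'a \<Rightarrow> real) \<Rightarrow> ('s \<times> 'a) set \<Rightarrow> real \<Rightarrow> 's option \<Rightarrow> 'a \<Rightarrow> real" where
  "abs_r r I R None a = 0"
| "abs_r r I R (Some s) a = (if (s, a) \<in> I then R else r s a)"

end

theory Submission
  imports Defs
begin

definition polmod :: "('s \<times> 'a) set \<Rightarrow> ('s option \<Rightarrow> 'a pmf) \<Rightarrow> 's option \<Rightarrow> 'a pmf" where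
 "polmod I pol x = (case x of None \<Rightarrow> pol None | Some s \<Rightarrow>
    if set_pmf (pol (Some s)) \<inter> {a. (s,a) \<notin> I} \<noteq> {} then cond_pmf (pol (Some s)) {a. (s,a) \<notin> I}
    else return_pmf (SOME a. (s,a) \<notin> I))"

lemma polmod_supp:
  assumes "\<forall>s. \<exists>a. (s,a) \<notin> I" "a \<in> set_pmf (polmod I pol (Some s))"
  shows "(s,a) \<notin> I"
proof (cases "set_pmf (pol (Some s)) \<inter> {a. (s,a) \<notin> I} \<noteq> {}")
  case True
  then show ?thesis using assms(2) by (simp add: polmod_def set_cond_pmf)
next
  case False
  then show ?thesis using assms by (simp add: polmod_def) (metis someI_ex)
qed

lemma polmod_F:
  fixes f :: "'a \<Rightarrow> ennreal" and pol :: "'s option \<Rightarrow> 'a pmf"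
  shows "(\<integral>\<^sup>+a. (if (s,a) \<in> I then 0 else f a) \<partial>pol (Some s))
      \<le> (\<integral>\<^sup>+a. (if (s,a) \<in> I then 0 else f a) \<partial>polmod I pol (Some s))"
proof (cases "set_pmf (pol (Some s)) \<inter> {a. (s,a) \<notin> I} \<noteq> {}")
  case True
  let ?p = "pol (Some s)" and ?N = "{a. (s,a) \<notin> I}"
  have m: "0 < measure_pmf.prob ?p ?N" "measure_pmf.prob ?p ?N \<le> 1"
  proof -
    obtain a0 where "a0 \<in> set_pmf ?p" "a0 \<in> ?N" using True by blast
    then show "0 < measure_pmf.prob ?p ?N" by (rule measure_pmf_posI)
  qed simp
  have pm: "polmod I pol (Some s) = cond_pmf ?p ?N" using True by (simp add: polmod_def)
  show ?thesis unfolding pm nn_integral_measure_pmf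
  proof (rule nn_integral_mono)
    fix a
    show "ennreal (pmf ?p a) * (if (s,a) \<in> I then 0 else f a) \<le> ennreal (pmf (cond_pmf ?p ?N) a) * (if (s,a) \<in> I then 0 else f a)"
    proof (cases "(s,a) \<in> I")
      case False
      have "pmf ?p a \<le> pmf ?p a / measure_pmf.prob ?p ?N"
        using m by (simp add: le_divide_eq mult_left_le)
      then have "pmf ?p a \<le> pmf (cond_pmf ?p ?N) a" using False True by (simp add: pmf_cond)
      then show ?thesis using False by (simp add: mult_right_mono)
    qed simp
  qed
next
  case False
  have "(\<integral>\<^sup>+a. (if (s,a) \<in> I then 0 else f a) \<partial>pol (Some s)) = (\<integral>\<^sup>+a. 0 \<partial>pol (Some s))"
    using False by (intro nn_integral_cong_AE) (auto simp: AE_measure_pmf_iff)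
  then show ?thesis by simp
qed

lemma G:
  fixes g g' :: "'s option \<Rightarrow> ennreal"
  assumes "\<forall>s. pmf M (Some s) \<le> pmf M' (Some s)" "g None = 0" "\<forall>s. g (Some s) \<le> g' (Some s)"
  shows "(\<integral>\<^sup>+x. g x \<partial>M) \<le> (\<integral>\<^sup>+x. g' x \<partial>M')"
  unfolding nn_integral_measure_pmf
proof (rule nn_integral_mono)
  fix x show "ennreal (pmf M x) * g x \<le> ennreal (pmf M' x) * g' x"
    using assms by (cases x) (auto intro!: mult_mono)
qed

lemma mono_SD:
  assumes N: "\<forall>s. \<exists>a. (s,a) \<notin> I"
  shows "pmf (state_dist D (abs_P P I) pol t) (Some s) \<le> pmf (state_dist D (abs_P P I) (polmod I pol) t) (Some s)"
proof (induction t arbitrary: s)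
  case 0
  then show ?case by simp
next
  case (Suc t)
  define g where "g = (\<lambda>pl x. \<integral>\<^sup>+a. ennreal (pmf (abs_P P I x a) (Some s)) \<partial>measure_pmf (pl x))"
  have e: "ennreal (pmf (state_dist D (abs_P P I) pl (Suc t)) (Some s)) = (\<integral>\<^sup>+x. g pl x \<partial>state_dist D (abs_P P I) pl t)" for pl
    by (simp add: ennreal_pmf_bind g_def)
  have gS: "g pl (Some s') = (\<integral>\<^sup>+a. (if (s',a) \<in> I then 0 else ennreal (pmf (P s' a) s)) \<partial>pl (Some s'))" for pl s'
    unfolding g_def by (intro nn_integral_cong) (simp add: pmf_map_inj')
  have "ennreal (pmf (state_dist D (abs_P P I) pol (Suc t)) (Some s)) \<le> ennreal (pmf (state_dist D (abs_P P I) (polmod I pol) (Suc t)) (Some s))"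
    unfolding e
  proof (rule G)
    show "\<forall>s. pmf (state_dist D (abs_P P I) pol t) (Some s) \<le> pmf (state_dist D (abs_P P I) (polmod I pol) t) (Some s)"
      using Suc by blast
    show "g pol None = 0" by (simp add: g_def)
    show "\<forall>s. g pol (Some s) \<le> g (polmod I pol) (Some s)"
      unfolding gS by (intro allI polmod_F)
  qed
  then show ?case by simp
qed

lemma pmf_integral_ennreal:
  fixes h :: "'b \<Rightarrow> real"
  assumes "\<forall>y. 0 \<le> h y \<and> h y \<le> B"
  shows "ennreal (measure_pmf.expectation M h) = (\<integral>\<^sup>+y. ennreal (h y) \<partial>M)"
  using assms
  by (intro nn_integral_eq_integral[symmetric] measure_pmf.integrable_const_bound[where B=B]) auto

lemma mono_rew:
  assumes N: "\<forall>s. \<exists>a. (s,a) \<notin> I" and r: "\<forall>s a. 0 \<le> r s a \<and> r s a \<le> 1"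
  shows "measure_pmf.expectation (sa_dist D (abs_P P I) pol t) (\<lambda>(x,a). abs_r r I 0 x a)
     \<le> measure_pmf.expectation (sa_dist D (abs_P P I) (polmod I pol) t) (\<lambda>(x,a). abs_r r I 0 x a)"
proof -
  have bd: "\<forall>y. 0 \<le> (\<lambda>(x,a). abs_r r I 0 x a) y \<and> (\<lambda>(x,a). abs_r r I 0 x a) y \<le> 1"
  proof
    fix y :: "'a option \<times> 'b" obtain x a where y: "y = (x,a)" by fastforce
    show "0 \<le> (\<lambda>(x,a). abs_r r I 0 x a) y \<and> (\<lambda>(x,a). abs_r r I 0 x a) y \<le> 1"
      using r by (cases x) (auto simp: y)
  qed
  define g where "g = (\<lambda>pl x. \<integral>\<^sup>+a. ennreal (abs_r r I 0 x a) \<partial>measure_pmf (pl x))"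
  have e: "ennreal (measure_pmf.expectation (sa_dist D (abs_P P I) pl t) (\<lambda>(x,a). abs_r r I 0 x a))
     = (\<integral>\<^sup>+x. g pl x \<partial>state_dist D (abs_P P I) pl t)" for pl
    unfolding pmf_integral_ennreal[OF bd] by (simp add: sa_dist_def g_def)
  have gS: "g pl (Some s') = (\<integral>\<^sup>+a. (if (s',a) \<in> I then 0 else ennreal (r s' a)) \<partial>pl (Some s'))" for pl s'
    unfolding g_def by (intro nn_integral_cong) simp
  have "ennreal (measure_pmf.expectation (sa_dist D (abs_P P I) pol t) (\<lambda>(x,a). abs_r r I 0 x a))
     \<le> ennreal (measure_pmf.expectation (sa_dist D (abs_P P I) (polmod I pol) t) (\<lambda>(x,a). abs_r r I 0 x a))"
    unfolding e
  proof (rule G)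
    show "\<forall>s. pmf (state_dist D (abs_P P I) pol t) (Some s) \<le> pmf (state_dist D (abs_P P I) (polmod I pol) t) (Some s)"
      using mono_SD[OF N] by blast
    show "g pol None = 0" by (simp add: g_def)
    show "\<forall>s. g pol (Some s) \<le> g (polmod I pol) (Some s)"
      unfolding gS by (intro allI polmod_F)
  qed
  moreover have "0 \<le> measure_pmf.expectation (sa_dist D (abs_P P I) (polmod I pol) t) (\<lambda>(x,a). abs_r r I 0 x a)"
    using bd by (intro integral_nonneg_AE) auto
  ultimately show ?thesis by (simp add: ennreal_le_iff)
qed

definition Jset :: "('s \<times> 'a) set \<Rightarrow> ('s option \<times> 'a) set" where
  "Jset I = {(x,a). \<exists>s. x = Some s \<and> (s,a) \<in> I}"

lemma decomp:
  assumes r: "\<forall>s a. 0 \<le> r s a \<and> r s a \<le> 1"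
  shows "measure_pmf.expectation M (\<lambda>(x,a). abs_r r I R x a)
     = measure_pmf.expectation M (\<lambda>(x,a). abs_r r I 0 x a) + R * measure_pmf.prob M (Jset I)"
proof -
  have pw: "(\<lambda>(x,a). abs_r r I R x a) = (\<lambda>y. (\<lambda>(x,a). abs_r r I 0 x a) y + R * indicator (Jset I) y)"
  proof
    fix y :: "'a option \<times> 'b" obtain x a where y: "y = (x,a)" by fastforce
    show "(\<lambda>(x,a). abs_r r I R x a) y = (\<lambda>(x,a). abs_r r I 0 x a) y + R * indicator (Jset I) y"
      by (cases x) (auto simp: y Jset_def indicator_def)
  qed
  have i1: "integrable M (\<lambda>(x,a). abs_r r I 0 x a)"
  proof (rule measure_pmf.integrable_const_bound[where B=1])
    show "AE y in M. norm ((\<lambda>(x,a). abs_r r I 0 x a) y) \<le> 1"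
    proof (rule AE_I2)
      fix y :: "'a option \<times> 'b" obtain x a where y: "y = (x,a)" by fastforce
      show "norm ((\<lambda>(x,a). abs_r r I 0 x a) y) \<le> 1" using r by (cases x) (auto simp: y)
    qed
  qed simp
  have i2: "integrable M (\<lambda>y. R * indicator (Jset I) y)"
    by (intro measure_pmf.integrable_const_bound[where B="\<bar>R\<bar>"]) (auto simp: indicator_def)
  show ?thesis unfolding pw
    by (subst Bochner_Integration.integral_add[OF i1 i2]) simp
qed

lemma set_sa_dist: "set_pmf (sa_dist D Q pol t) = {(x,a). x \<in> set_pmf (state_dist D Q pol t) \<and> a \<in> set_pmf (pol x)}"
  unfolding sa_dist_def by auto

lemma p_zero_iff: "measure_pmf.prob (sa_dist D Q pol t) (Jset I) = 0 \<longleftrightarrow>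
   (\<forall>s a. Some s \<in> set_pmf (state_dist D Q pol t) \<longrightarrow> a \<in> set_pmf (pol (Some s)) \<longrightarrow> (s,a) \<notin> I)"
  unfolding measure_pmf_zero_iff set_sa_dist Jset_def by auto

lemma traj_ne: "xs \<in> set_pmf (traj d0 P pol h) \<Longrightarrow> xs \<noteq> []"
  by (induction h arbitrary: xs) auto

lemma traj_claim:
  assumes "\<forall>t\<le>h. measure_pmf.prob (sa_dist (map_pmf Some d0) (abs_P P I) pol t) (Jset I) = 0"
  shows "\<forall>xs\<in>set_pmf (traj d0 P (\<lambda>s. pol (Some s)) h). (\<forall>q\<in>set xs. q \<notin> I)
     \<and> Some (fst (last xs)) \<in> set_pmf (state_dist (map_pmf Some d0) (abs_P P I) pol h)
     \<and> snd (last xs) \<in> set_pmf (pol (Some (fst (last xs))))"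
  using assms
proof (induction h)
  case 0
  then have z: "\<forall>s a. Some s \<in> set_pmf (map_pmf Some d0) \<longrightarrow> a \<in> set_pmf (pol (Some s)) \<longrightarrow> (s,a) \<notin> I"
    using p_zero_iff[of "map_pmf Some d0" "abs_P P I" pol 0 I] by simp
  show ?case using z by auto
next
  case (Suc h)
  have IH: "\<forall>xs\<in>set_pmf (traj d0 P (\<lambda>s. pol (Some s)) h). (\<forall>q\<in>set xs. q \<notin> I)
     \<and> Some (fst (last xs)) \<in> set_pmf (state_dist (map_pmf Some d0) (abs_P P I) pol h)
     \<and> snd (last xs) \<in> set_pmf (pol (Some (fst (last xs))))"
    using Suc by auto
  have z: "\<forall>s a. Some s \<in> set_pmf (state_dist (map_pmf Some d0) (abs_P P I) pol (Suc h)) \<longrightarrow> a \<in> set_pmf (pol (Some s)) \<longrightarrow> (s,a) \<notin> I"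
    using p_zero_iff[of "map_pmf Some d0" "abs_P P I" pol "Suc h" I] Suc.prems by simp
  show ?case
  proof
    fix ys assume "ys \<in> set_pmf (traj d0 P (\<lambda>s. pol (Some s)) (Suc h))"
    then obtain xs s' a' where xs: "xs \<in> set_pmf (traj d0 P (\<lambda>s. pol (Some s)) h)"
      and s': "s' \<in> set_pmf (P (fst (last xs)) (snd (last xs)))" and a': "a' \<in> set_pmf (pol (Some s'))"
      and ys: "ys = xs @ [(s', a')]" by auto
    obtain s a where la: "last xs = (s,a)" by fastforce
    have h1: "\<forall>q\<in>set xs. q \<notin> I" and h2: "Some s \<in> set_pmf (state_dist (map_pmf Some d0) (abs_P P I) pol h)"
      and h3: "a \<in> set_pmf (pol (Some s))"
      using IH xs la by auto
    have nI: "(s,a) \<notin> I" using h1 la xs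
      using traj_ne[OF xs] by (metis last_in_set)
    have "Some s' \<in> set_pmf (state_dist (map_pmf Some d0) (abs_P P I) pol (Suc h))"
    proof -
      have "Some s' \<in> set_pmf (abs_P P I (Some s) a)" using nI s' la by simp
      then show ?thesis using h2 h3 by (simp del: abs_P.simps) blast
    qed
    then show "(\<forall>q\<in>set ys. q \<notin> I)
     \<and> Some (fst (last ys)) \<in> set_pmf (state_dist (map_pmf Some d0) (abs_P P I) pol (Suc h))
     \<and> snd (last ys) \<in> set_pmf (pol (Some (fst (last ys))))"
      using z a' h1 ys by auto
  qed
qed


lemma main_gen:
  fixes P :: "'s \<Rightarrow> 'a \<Rightarrow> 's pmf" and pol :: "'s option \<Rightarrow> 'a pmf"
  assumes r: "\<forall>s a. 0 \<le> r s a \<and> r s a \<le> 1" and g: "0 \<le> \<gamma>" "\<gamma> < 1" and R: "R < 0"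
    and N: "\<forall>s. \<exists>a. (s,a) \<notin> I"
    and opt: "mdp_value \<gamma> (abs_r r I R) (map_pmf Some d0) (abs_P P I) (polmod I pol)
       \<le> mdp_value \<gamma> (abs_r r I R) (map_pmf Some d0) (abs_P P I) pol"
  shows "interv_prob \<gamma> I d0 P (\<lambda>s. pol (Some s)) = 0"
proof -
  define D where "D = map_pmf Some d0"
  define Q where "Q = abs_P P I"
  define E where "E = (\<lambda>pl t. measure_pmf.expectation (sa_dist D Q pl t) (\<lambda>(x,a). abs_r r I 0 x a))"
  define p where "p = (\<lambda>pl t. measure_pmf.prob (sa_dist D Q pl t) (Jset I))"
  define a where "a = (\<lambda>pl t. measure_pmf.expectation (sa_dist D Q pl t) (\<lambda>(x,a). abs_r r I R x a))"
  have dec: "a pl t = E pl t + R * p pl t" for pl t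
    unfolding a_def E_def p_def by (rule decomp[OF r])
  have p0': "p (polmod I pol) t = 0" for t
    unfolding p_def p_zero_iff using polmod_supp[OF N] by blast
  have Emono: "E pol t \<le> E (polmod I pol) t" for t
    unfolding E_def Q_def by (rule mono_rew[OF N r])
  have Ebd: "0 \<le> E pl t \<and> E pl t \<le> 1" for pl t
  proof -
    have bd: "\<forall>y. 0 \<le> (\<lambda>(x,a). abs_r r I 0 x a) y \<and> (\<lambda>(x,a). abs_r r I 0 x a) y \<le> (1::real)"
    proof
      fix y :: "'s option \<times> 'a" obtain x a where y: "y = (x,a)" by fastforce
      show "0 \<le> (\<lambda>(x,a). abs_r r I 0 x a) y \<and> (\<lambda>(x,a). abs_r r I 0 x a) y \<le> 1"
        using r by (cases x) (auto simp: y)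
    qed
    have "ennreal (E pl t) = (\<integral>\<^sup>+y. ennreal ((\<lambda>(x,a). abs_r r I 0 x a) y) \<partial>sa_dist D Q pl t)"
      unfolding E_def by (rule pmf_integral_ennreal[OF bd])
    also have "\<dots> \<le> (\<integral>\<^sup>+y. 1 \<partial>sa_dist D Q pl t)"
      using bd by (intro nn_integral_mono) auto
    also have "\<dots> = 1" by simp
    finally have "ennreal (E pl t) \<le> 1" .
    moreover have "0 \<le> E pl t" unfolding E_def using bd by (intro integral_nonneg_AE) auto
    ultimately show ?thesis by simp
  qed
  have pbd: "0 \<le> p pl t \<and> p pl t \<le> 1" for pl t
    unfolding p_def by auto
  have abd: "\<bar>a pl t\<bar> \<le> 1 - R" for pl t
  proof -
    have "R * 1 \<le> R * p pl t" using pbd[of pl t] R by (intro mult_left_mono_neg) auto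
    moreover have "R * p pl t \<le> 0" using pbd[of pl t] R by (intro mult_nonpos_nonneg) auto
    ultimately show ?thesis using dec[of pl t] Ebd[of pl t] by linarith
  qed
  have summ: "summable (\<lambda>t. \<gamma>^t * a pl t)" for pl
  proof (rule summable_comparison_test')
    show "summable (\<lambda>t. (1 - R) * \<gamma>^t)" using g by (intro summable_mult summable_geometric) auto
    fix t show "norm (\<gamma>^t * a pl t) \<le> (1 - R) * \<gamma>^t"
      using abd[of pl t] g by (simp add: abs_mult mult.commute[of "\<gamma>^t"] mult_right_mono)
  qed
  have mv: "mdp_value \<gamma> (abs_r r I R) D Q pl = (\<Sum>t. \<gamma>^t * a pl t)" for pl
    unfolding mdp_value_def a_def by simp
  define d where "d = (\<lambda>t. \<gamma>^t * a (polmod I pol) t - \<gamma>^t * a pol t)"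
  have dge: "\<gamma>^t * ((-R) * p pol t) \<le> d t" for t
  proof -
    have "a (polmod I pol) t - a pol t \<ge> (-R) * p pol t"
      using dec[of "polmod I pol" t] dec[of pol t] p0'[of t] Emono[of t] by simp
    then show ?thesis unfolding d_def using g
      by (metis mult_left_mono right_diff_distrib zero_le_power)
  qed
  have lnn: "0 \<le> \<gamma>^t * ((-R) * p pol t)" for t
    using pbd[of pol t] R g by (intro mult_nonneg_nonneg) auto
  have d0: "0 \<le> d t" for t
    using dge[of t] lnn[of t] by linarith
  have sd: "summable d" unfolding d_def using summ by (intro summable_diff)
  have "suminf d = (\<Sum>t. \<gamma>^t * a (polmod I pol) t) - (\<Sum>t. \<gamma>^t * a pol t)"
    unfolding d_def using suminf_diff[OF summ summ] by simp
  also have "\<dots> \<le> 0" using opt mv unfolding D_def Q_def by simp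
  finally have "suminf d \<le> 0" .
  moreover have "0 \<le> suminf d" using sd d0 by (intro suminf_nonneg)
  ultimately have "suminf d = 0" by simp
  then have dz: "d t = 0" for t using suminf_eq_zero_iff[OF sd] d0 by blast
  have pz: "\<gamma>^t * p pol t = 0" for t
  proof -
    have "\<gamma>^t * ((-R) * p pol t) = 0" using dge[of t] dz[of t] lnn[of t] by linarith
    then show ?thesis using R by simp
  qed
  have term0: "\<gamma>^h * measure_pmf.prob (traj d0 P (\<lambda>s. pol (Some s)) h) {xs. \<exists>q \<in> set xs. q \<in> I} = 0" for h
  proof (cases "\<gamma>^h = 0")
    case False
    have "\<forall>t\<le>h. p pol t = 0"
    proof (intro allI impI)
      fix t assume "t \<le> h"
      then have "\<gamma>^t \<noteq> 0" using False by (metis power_eq_0_iff zero_less_iff_neq_zero bot_nat_0.extremum_uniqueI)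
      then show "p pol t = 0" using pz[of t] by (metis mult_eq_0_iff)
    qed
    then have "\<forall>xs\<in>set_pmf (traj d0 P (\<lambda>s. pol (Some s)) h). (\<forall>q\<in>set xs. q \<notin> I)"
      using traj_claim[of h d0 P I pol] unfolding p_def D_def Q_def by blast
    then have "measure_pmf.prob (traj d0 P (\<lambda>s. pol (Some s)) h) {xs. \<exists>q \<in> set xs. q \<in> I} = 0"
      unfolding measure_pmf_zero_iff by blast
    then show ?thesis by simp
  qed simp
  show ?thesis unfolding interv_prob_def term0 by simp
qed

theorem mainTheorem9:
  fixes P :: "'s \<Rightarrow> 'a \<Rightarrow> 's pmf" and r :: "'s \<Rightarrow> 'a \<Rightarrow> real"
    and \<gamma> :: real and d0 :: "'s pmf"
    and s_tri s_circ :: 's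
    and Qbar :: "'s \<Rightarrow> 'a \<Rightarrow> real" and mu :: "'s \<Rightarrow> 'a pmf" and \<eta> :: real
    and R :: real and pol_opt :: "'s option \<Rightarrow> 'a pmf"
  assumes r_range: "\<forall>s a. 0 \<le> r s a \<and> r s a \<le> 1"
    and gamma: "0 \<le> \<gamma>" "\<gamma> < 1"
    and distinct_unsafe: "s_tri \<noteq> s_circ"
    and P_tri: "\<forall>a. P s_tri a = return_pmf s_circ"
    and P_circ: "\<forall>a. P s_circ a = return_pmf s_circ"
    and r_unsafe: "\<forall>a. r s_tri a = 0 \<and> r s_circ a = 0"
    and eta: "0 \<le> \<eta>" "\<eta> \<le> 1"
    and Qbar_range: "\<forall>s \<in> UNIV - {s_tri, s_circ}. \<forall>a. 0 \<le> Qbar s a \<and> Qbar s a \<le> 1"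
    and R_neg: "R < 0"
    and partial: "partial_set (interv_set (UNIV - {s_tri, s_circ}) Qbar mu \<eta>)"
    and optimal: "\<forall>pol :: 's option \<Rightarrow> 'a pmf.
        mdp_value \<gamma> (abs_r r (interv_set (UNIV - {s_tri, s_circ}) Qbar mu \<eta>) R) (map_pmf Some d0)
          (abs_P P (interv_set (UNIV - {s_tri, s_circ}) Qbar mu \<eta>)) pol
        \<le> mdp_value \<gamma> (abs_r r (interv_set (UNIV - {s_tri, s_circ}) Qbar mu \<eta>) R) (map_pmf Some d0)
          (abs_P P (interv_set (UNIV - {s_tri, s_circ}) Qbar mu \<eta>)) pol_opt"
  shows "interv_prob \<gamma> (interv_set (UNIV - {s_tri, s_circ}) Qbar mu \<eta>) d0 P (\<lambda>s. pol_opt (Some s)) = 0"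
  proof -
  let ?I = "interv_set (UNIV - {s_tri, s_circ}) Qbar mu \<eta>"
  have N: "\<forall>s. \<exists>a. (s,a) \<notin> ?I"
  proof
    fix s show "\<exists>a. (s,a) \<notin> ?I"
    proof (cases "(s, undefined) \<in> ?I")
      case True
      then show ?thesis using partial unfolding partial_set_def by blast
    qed blast
  qed
  show ?thesis
    by (rule main_gen[OF r_range gamma R_neg N]) (use optimal in blast)
qed

end
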